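(* Let $q$ be a power of an odd prime $p$, let $b\in\mathbb{F}_q$ with $b\ne0$, and let $n\ge2$ be an integer. Let $r\ge0$ be such that $p^r$ divides $n+1$ but $p^{r+1}$ does not, and let $m\ge0$ be defined by $n+1=p^r(m+1)$. Assume $r\ge1$, and assume: if $q\equiv1\pmod4$ then $\gcd(m+1,(q^2-1)/2)=1$; if $q\equiv3\pmod4$ then $\gcd(m+1,(q^4-1)/2)$ divides $(q-1)/2$. Let $\mu\in\mathbb{F}_{q^2}$ with $\mu^2=-1$. Then $\hat C_n(a,b)$ is LCD for every $a\in\mathbb{F}_q\setminus\{\mu+2b,\,\mu-2b,\,-\mu+2b,\,-\mu-2b\}$.
   Context: For $a,b\in\mathbb{F}_q$ and $n\ge 2$, $\hat T_n(a,b)$ denotes the $n\times n$ symmetric tridiagonal Toeplitz matrix over $\mathbb{F}_q$ with all diagonal entries equal to $a$, all entries on the first super- and sub-diagonals equal to $b$, and all other entries $0$. $\hat C_n(a,b)$ is the $[2n,n]$ linear code over $\mathbb{F}_q$ with generator matrix $[I_n\mid \hat T_n(a,b)]$. A linear code $C$ is LCD if $C\cap C^\perp=\{0\}$ (Euclidean dual). *)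

theory Defs
  imports "Jordan_Normal_Form.Matrix"
begin

definition T_hat :: "nat \<Rightarrow> 'a::field \<Rightarrow> 'a \<Rightarrow> 'a mat" where
  "T_hat n a b = mat n n (\<lambda>(i,j). if i = j then a else if i = j + 1 \<or> j = i + 1 then b else 0)"

definition G_hat :: "nat \<Rightarrow> 'a::field \<Rightarrow> 'a \<Rightarrow> 'a mat" where
  "G_hat n a b = mat n (2*n) (\<lambda>(i,j). if j < n then (if i = j then 1 else 0) else T_hat n a b $$ (i, j - n))"

definition row_code :: "'a::field mat \<Rightarrow> 'a vec set" where
  "row_code G = {transpose_mat G *\<^sub>v u | u. u \<in> carrier_vec (dim_row G)}"

definition C_hat :: "nat \<Rightarrow> 'a::field \<Rightarrow> 'a \<Rightarrow> 'a vec set" where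
  "C_hat n a b = row_code (G_hat n a b)"

definition dual_code :: "nat \<Rightarrow> 'a::field vec set \<Rightarrow> 'a vec set" where
  "dual_code N C = {v \<in> carrier_vec N. \<forall>c\<in>C. scalar_prod v c = 0}"

definition is_LCD :: "nat \<Rightarrow> 'a::field vec set \<Rightarrow> bool" where
  "is_LCD N C \<longleftrightarrow> C \<inter> dual_code N C = {0\<^sub>v N}"

end

theory Submission
  imports Defs "HOL-Algebra.Algebraic_Closure_Type" "HOL-Number_Theory.Residues"
begin

hide_const (open) Divisibility.prime
no_notation fps_nth (infixl "$" 75)

hide_const (open) Divisibility.prime
no_notation fps_nth (infixl "$" 75)


lemma pow_card_same:
  fixes x :: "'c :: {finite,field}"
  shows "x ^ card (UNIV :: 'c set) = x"
proof (cases "x = 0")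
  case False
  have "x * (\<Prod>y\<in>UNIV-{0}. x * y) = x * x ^ (card (UNIV :: 'c set) - 1) * \<Prod>(UNIV-{0})"
    by (simp add: prod.distrib mult_ac)
  also have "x * x ^ (card (UNIV :: 'c set) - 1) = x ^ Suc (card (UNIV :: 'c set) - 1)"
    by (subst power_Suc) auto
  also have "Suc (card (UNIV :: 'c set) - 1) = card (UNIV :: 'c set)"
    using finite_UNIV_card_ge_0[where ?'a = 'c] by simp
  also have "(\<Prod>y\<in>UNIV-{0}. x * y) = (\<Prod>y\<in>UNIV-{0}. y)"
    by (rule prod.reindex_bij_witness[of _ "\<lambda>y. y / x" "\<lambda>y. x * y"]) (use False in auto)
  finally show ?thesis
    by simp
qed (use finite_UNIV_card_ge_0[where ?'a = 'c] in auto)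

lemma gcd_pow_one:
  fixes t :: "'c :: monoid_mult"
  assumes "t ^ a = 1" "t ^ b = 1" "a \<noteq> 0"
  shows "t ^ gcd a b = 1"
proof -
  obtain x y where xy: "a * x = b * y + gcd a b" using bezout_nat[OF assms(3)] by blast
  have "1 = t ^ (a * x)" by (simp add: power_mult assms)
  also have "\<dots> = t ^ (b * y) * t ^ gcd a b" by (simp add: xy power_add)
  also have "\<dots> = t ^ gcd a b" by (simp add: power_mult assms)
  finally show ?thesis by simp
qed

lemma frob_one:
  fixes z :: "'c :: field"
  assumes "prime CHAR('c)" "m = CHAR('c) ^ j" "z ^ m = 1"
  shows "z = 1"
proof -
  have "z ^ m = (z - 1) ^ m + 1 ^ m"
    using freshmans_dream'[OF assms(1,2), of "z - 1" 1] by simp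
  hence "(z - 1) ^ m = 0" using assms(3) by simp
  thus ?thesis by simp
qed

lemma frob_inv:
  fixes t :: "'c :: field"
  assumes "prime CHAR('c)" "m = CHAR('c) ^ j" "t \<noteq> 0"
    and "(t + inverse t) ^ m = t + inverse t"
  shows "t ^ m = t \<or> t ^ m = inverse t"
proof -
  define \<tau> where "\<tau> = t ^ m"
  have tz: "\<tau> \<noteq> 0" using assms(3) by (simp add: \<tau>_def)
  have "(t + inverse t) ^ m = \<tau> + inverse \<tau>"
    using freshmans_dream'[OF assms(1,2)] by (simp add: \<tau>_def power_inverse)
  hence e: "\<tau> + inverse \<tau> = t + inverse t" using assms(4) by simp
  have "(\<tau> - t) * (\<tau> * t - 1) = \<tau> * t * ((\<tau> + inverse \<tau>) - (t + inverse t))"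
    using tz assms(3) by (simp add: field_simps)
  hence "(\<tau> - t) * (\<tau> * t - 1) = 0" using e by simp
  hence "\<tau> - t = 0 \<or> \<tau> * t - 1 = 0" by simp
  hence "\<tau> = t \<or> \<tau> = inverse t" using assms(3)
    by (metis eq_iff_diff_eq_0 inverse_unique mult.commute)
  thus ?thesis by (simp add: \<tau>_def)
qed



definition Tm :: "'c::field \<Rightarrow> 'c \<Rightarrow> nat \<Rightarrow> nat \<Rightarrow> 'c" where
  "Tm c d i j = (if i = j then c else if i = j + 1 \<or> j = i + 1 then d else 0)"

lemma Tm_sym: "Tm c d i j = Tm c d j i"
  unfolding Tm_def by auto

lemma tri3:
  fixes x :: "nat \<Rightarrow> 'c::field"
  assumes "k < n"
  shows "(\<Sum>i<n. Tm c d i k * x i) =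
    (if k = 0 then 0 else d * x (k-1)) + c * x k + (if k+1 < n then d * x (k+1) else 0)"
proof -
  have pt: "Tm c d i k * x i = (if i = k then c * x k else 0) + (if i = k - 1 \<and> 0 < k then d * x (k-1) else 0)
      + (if i = k + 1 then d * x (k+1) else 0)" for i
    unfolding Tm_def by auto
  have "(\<Sum>i<n. Tm c d i k * x i) = (\<Sum>i<n. (if i = k then c * x k else 0))
     + (\<Sum>i<n. (if i = k - 1 \<and> 0 < k then d * x (k-1) else 0))
     + (\<Sum>i<n. (if i = k + 1 then d * x (k+1) else 0))"
    by (simp only: pt sum.distrib)
  also have "\<dots> = c * x k + (if k = 0 then 0 else d * x (k-1)) + (if k+1 < n then d * x (k+1) else 0)"
    using assms by (auto simp: sum.delta' sum.If_cases)
  finally show ?thesis by (simp add: algebra_simps)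
qed

lemma eigen:
  fixes V :: "nat \<Rightarrow> 'c::field"
  assumes bnz: "b \<noteq> 0" and tnz: "t \<noteq> 0" and tdiff: "t - inverse t \<noteq> 0"
    and tw: "t + inverse t = (l - a) / b" and n1: "n \<ge> 1"
    and eq: "\<forall>k<n. (if k = 0 then 0 else b * V (k-1)) + a * V k + (if k+1 < n then b * V (k+1) else 0) = l * V k"
    and nz: "\<exists>k<n. V k \<noteq> 0"
  shows "t ^ (2*(n+1)) = 1"
proof -
  define W where "W k = (if k < n then V k else 0)" for k
  define s where "s = inverse t"
  define w where "w = (l - a) / b"
  have ts: "t * s = 1" using tnz by (simp add: s_def)
  define E where "E k = t^(k+1) - s^(k+1)" for k
  have rec: "W (k+2) = w * W (k+1) - W k" if "k + 1 < n" for k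
  proof -
    have "b * V k + a * V (k+1) + b * W (k+2) = l * V (k+1)"
      using eq[rule_format, of "k+1"] that by (auto simp: W_def)
    hence "b * W (k+2) = (l - a) * W (k+1) - b * W k" using that
      by (simp add: W_def algebra_simps)
    hence "W (k+2) = ((l - a) * W (k+1) - b * W k) / b" using bnz
      by (simp add: field_simps)
    thus ?thesis using bnz by (simp add: w_def field_simps)
  qed
  have W1: "W 1 = w * W 0"
  proof -
    have "a * V 0 + b * W 1 = l * V 0"
      using eq[rule_format, of 0] n1 by (auto simp: W_def)
    thus ?thesis using bnz n1 by (simp add: w_def W_def field_simps)
  qed
  have ww: "w = t + s" using tw by (simp add: w_def s_def)
  have Erec: "E (k+2) = w * E (k+1) - E k" for k
  proof -
    have a1: "t * s ^ (k+2) = s ^ (k+1)"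
      by (metis ts mult.assoc mult_1 power_Suc add_2_eq_Suc' Suc_eq_plus1)
    have a2: "s * t ^ (k+2) = t ^ (k+1)"
      by (metis ts mult.assoc mult.commute mult_1 power_Suc add_2_eq_Suc' Suc_eq_plus1)
    have "w * E (k+1) - E k = t * t^(k+2) - t * s^(k+2) + s * t^(k+2) - s * s^(k+2) - (t^(k+1) - s^(k+1))"
      by (simp add: ww E_def algebra_simps)
    also have "\<dots> = t * t^(k+2) - s * s^(k+2)" unfolding a1 a2 by (simp add: algebra_simps)
    also have "\<dots> = E (k+2)" by (simp add: E_def)
    finally show ?thesis by simp
  qed
  have claim: "k + 1 \<le> n \<longrightarrow> W k * (t - s) = W 0 * E k \<and> W (k+1) * (t - s) = W 0 * E (k+1)" for k
  proof (induction k)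
    case 0
    have "W 1 * (t - s) = W 0 * ((t + s) * (t - s))" by (subst W1) (simp add: ww algebra_simps)
    also have "(t + s) * (t - s) = E 1" by (simp add: E_def algebra_simps power2_eq_square)
    finally show ?case by (simp add: E_def)
  next
    case (Suc k)
    show ?case
    proof
      assume h: "Suc k + 1 \<le> n"
      hence ih: "W k * (t - s) = W 0 * E k \<and> W (k+1) * (t - s) = W 0 * E (k+1)" using Suc by simp
      have r: "W (k+2) = w * W (k+1) - W k" using rec[of k] h by simp
      have "W (k+2) * (t - s) = w * (W (k+1) * (t - s)) - W k * (t - s)"
        unfolding r by (simp add: algebra_simps)
      also have "\<dots> = w * (W 0 * E (k+1)) - W 0 * E k" using ih by simp
      also have "\<dots> = W 0 * (w * E (k+1) - E k)" by (simp add: algebra_simps)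
      also have "\<dots> = W 0 * E (k+2)" unfolding Erec[of k] ..
      finally show "W (Suc k) * (t - s) = W 0 * E (Suc k) \<and> W (Suc k + 1) * (t - s) = W 0 * E (Suc k + 1)"
        using ih by simp
    qed
  qed
  have tsd: "t - s \<noteq> 0" using tdiff by (simp add: s_def)
  have "W n = 0" by (simp add: W_def)
  hence En: "W 0 * E n = 0" using claim[of "n-1"] n1 by simp
  have W0: "W 0 \<noteq> 0"
  proof
    assume "W 0 = 0"
    hence "W k = 0" if "k \<le> n" for k using claim[of k] claim[of "k-1"] that tsd n1
      by (cases k) auto
    thus False using nz unfolding W_def by (metis less_imp_le)
  qed
  hence "E n = 0" using En by simp
  hence "t^(n+1) = s^(n+1)" by (simp add: E_def)
  hence "t^(2*(n+1)) = (t*s)^(n+1)" by (simp add: mult_2 power_add power_mult_distrib)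
  thus ?thesis using ts by simp
qed



lemma split2n: "(\<Sum>j = 0..<2*(n::nat). f j) = (\<Sum>j = 0..<n. f j) + (\<Sum>k = 0..<n. f (k + n))"
proof -
  have "(\<Sum>j = 0..<2*n. f j) = (\<Sum>j = 0..<n. f j) + (\<Sum>j = n..<n+n. f j)"
    by (simp add: mult_2 sum.atLeastLessThan_concat)
  also have "(\<Sum>j = n..<n+n. f j) = (\<Sum>k = 0..<n. f (k + n))"
    using sum.shift_bounds_nat_ivl[of f 0 n n] by simp
  finally show ?thesis .
qed

lemma G_entry:
  assumes "i < n" "j < 2*n"
  shows "G_hat n a b $$ (i, j) = (if j < n then (if i = j then 1 else 0) else Tm a b i (j - n))"
  using assms by (simp add: G_hat_def T_hat_def Tm_def)

lemma G_dims [simp]: "dim_row (G_hat n a b) = n" "dim_col (G_hat n a b) = 2*n"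
  by (simp_all add: G_hat_def)

lemma cvec_entry:
  assumes "u \<in> carrier_vec n" "j < 2*n"
  shows "(transpose_mat (G_hat n a b) *\<^sub>v u) $ j = (\<Sum>i = 0..<n. G_hat n a b $$ (i, j) * u $ i)"
  using assms by (simp add: scalar_prod_def mult.commute)

lemma cvec_dim [simp]: "dim_vec (transpose_mat (G_hat n a b) *\<^sub>v u) = 2*n" by simp

lemma lcd_reduce:
  fixes a b :: "'c::field"
  assumes H: "\<And>u::nat\<Rightarrow>'c. (\<forall>i<n. u i + (\<Sum>k<n. Tm a b i k * (\<Sum>j<n. Tm a b j k * u j)) = 0) \<Longrightarrow> (\<forall>i<n. u i = 0)"
  shows "is_LCD (2*n) (C_hat n a b)"
proof -
  let ?G = "G_hat n a b"
  have C_eq: "C_hat n a b = {transpose_mat ?G *\<^sub>v u | u. u \<in> carrier_vec n}"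
    by (simp add: C_hat_def row_code_def)
  have zero_in: "transpose_mat ?G *\<^sub>v 0\<^sub>v n = 0\<^sub>v (2*n)"
    by (intro eq_vecI) (auto simp: scalar_prod_def)
  have Csub: "C_hat n a b \<subseteq> carrier_vec (2*n)" unfolding C_eq by (auto intro!: carrier_vecI)
  show ?thesis unfolding is_LCD_def
  proof
    show "{0\<^sub>v (2 * n)} \<subseteq> C_hat n a b \<inter> dual_code (2 * n) (C_hat n a b)"
    proof -
      have "0\<^sub>v (2*n) \<in> C_hat n a b" unfolding C_eq using zero_in[symmetric] zero_carrier_vec by blast
      moreover have "0\<^sub>v (2*n) \<in> dual_code (2 * n) (C_hat n a b)"
        unfolding dual_code_def using Csub by auto
      ultimately show ?thesis by auto
    qed
  next
    show "C_hat n a b \<inter> dual_code (2 * n) (C_hat n a b) \<subseteq> {0\<^sub>v (2 * n)}"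
    proof
      fix c assume c: "c \<in> C_hat n a b \<inter> dual_code (2 * n) (C_hat n a b)"
      then obtain u where u: "u \<in> carrier_vec n" and cu: "c = transpose_mat ?G *\<^sub>v u"
        unfolding C_eq by auto
      have orth: "c \<bullet> c' = 0" if "c' \<in> C_hat n a b" for c'
        using c that unfolding dual_code_def by auto
      have cj1: "c $ j = u $ j" if "j < n" for j
      proof -
        have "c $ j = (\<Sum>i = 0..<n. ?G $$ (i, j) * u $ i)"
          unfolding cu by (rule cvec_entry[OF u]) (use that in simp)
        also have "\<dots> = (\<Sum>i = 0..<n. (if j = i then u $ i else 0))"
          by (intro sum.cong refl) (use that in \<open>simp add: G_entry\<close>)
        also have "\<dots> = u $ j" using that by (simp add: sum.delta)
        finally show ?thesis .
      qed
      have cj2: "c $ (k + n) = (\<Sum>i<n. Tm a b i k * u $ i)" if "k < n" for k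
      proof -
        have "c $ (k + n) = (\<Sum>i = 0..<n. ?G $$ (i, k + n) * u $ i)"
          unfolding cu by (rule cvec_entry[OF u]) (use that in simp)
        also have "\<dots> = (\<Sum>i = 0..<n. Tm a b i k * u $ i)"
          by (intro sum.cong refl) (use that in \<open>simp add: G_entry\<close>)
        finally show ?thesis by (simp add: atLeast0LessThan)
      qed
      have eqs: "\<forall>i<n. u $ i + (\<Sum>k<n. Tm a b i k * (\<Sum>j<n. Tm a b j k * u $ j)) = 0"
      proof (intro allI impI)
        fix i0 assume i0: "i0 < n"
        define c' where "c' = transpose_mat ?G *\<^sub>v unit_vec n i0"
        have c'C: "c' \<in> C_hat n a b" unfolding C_eq c'_def by (auto intro: unit_vec_carrier)
        have c'j: "c' $ j = ?G $$ (i0, j)" if "j < 2*n" for j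
        proof -
          have "c' $ j = (\<Sum>i = 0..<n. ?G $$ (i, j) * unit_vec n i0 $ i)"
            unfolding c'_def by (rule cvec_entry) (use that in auto)
          also have "\<dots> = (\<Sum>i = 0..<n. (if i0 = i then ?G $$ (i, j) else 0))"
            by (intro sum.cong refl) (use i0 in auto)
          also have "\<dots> = ?G $$ (i0, j)" using i0 by (simp add: sum.delta)
          finally show ?thesis .
        qed
        have "0 = c \<bullet> c'" using orth[OF c'C] by simp
        also have "\<dots> = (\<Sum>j = 0..<2*n. c $ j * c' $ j)" unfolding scalar_prod_def c'_def by simp
        also have "\<dots> = (\<Sum>j = 0..<n. c $ j * c' $ j) + (\<Sum>k = 0..<n. c $ (k+n) * c' $ (k+n))"
          by (rule split2n)
        also have "(\<Sum>j = 0..<n. c $ j * c' $ j) = (\<Sum>j = 0..<n. (if i0 = j then u $ j else 0))"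
          by (intro sum.cong refl) (simp add: cj1 c'j G_entry i0)
        also have "\<dots> = u $ i0" using i0 by (simp add: sum.delta)
        also have "(\<Sum>k = 0..<n. c $ (k+n) * c' $ (k+n)) = (\<Sum>k<n. Tm a b i0 k * (\<Sum>j<n. Tm a b j k * u $ j))"
          by (simp add: atLeast0LessThan cj2 c'j G_entry i0 mult.commute)
        finally show "u $ i0 + (\<Sum>k<n. Tm a b i0 k * (\<Sum>j<n. Tm a b j k * u $ j)) = 0" by simp
      qed
      have "\<forall>i<n. u $ i = 0" using H[of "\<lambda>i. u $ i"] eqs by blast
      hence "u = 0\<^sub>v n" using u by (intro eq_vecI) auto
      thus "c \<in> {0\<^sub>v (2 * n)}" using cu zero_in by simp
    qed
  qed
qed


lemma hom_sum:
  assumes "\<And>x y. h (x + y) = h x + h y" "h 0 = 0"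
  shows "h (\<Sum>i<(N::nat). f i) = (\<Sum>i<N. h (f i))"
  by (induction N) (simp_all add: assms)


lemma odd_suc2: "odd (x::nat) \<Longrightarrow> x = Suc (2 * ((x - 1) div 2))" by presburger
lemma odd_sub2: "odd (x::nat) \<Longrightarrow> x - 1 = 2 * ((x - 1) div 2)" by presburger

theorem corollary2p8:
  fixes a b :: "'a::{finite,field}"
    and emb :: "'a \<Rightarrow> 'b::{finite,field}"
    and \<mu> :: 'b
    and p q k n r m :: nat
  assumes p_prime: "prime p" and p_odd: "odd p"
    and q_def: "q = p ^ k" and k_pos: "k \<ge> 1"
    and card_a: "card (UNIV :: 'a set) = q"
    and card_b: "card (UNIV :: 'b set) = q ^ 2"
    and emb_add: "\<And>x y. emb (x + y) = emb x + emb y"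
    and emb_mult: "\<And>x y. emb (x * y) = emb x * emb y"
    and emb_one: "emb 1 = 1"
    and b_nz: "b \<noteq> 0"
    and n_ge: "n \<ge> 2"
    and r_div: "p ^ r dvd n + 1" and r_ndiv: "\<not> p ^ (r + 1) dvd n + 1"
    and m_def: "n + 1 = p ^ r * (m + 1)"
    and r_pos: "r \<ge> 1"
    and cond1: "q mod 4 = 1 \<Longrightarrow> gcd (m + 1) ((q^2 - 1) div 2) = 1"
    and cond3: "q mod 4 = 3 \<Longrightarrow> gcd (m + 1) ((q^4 - 1) div 2) dvd (q - 1) div 2"
    and mu_sq: "\<mu> ^ 2 = - 1"
    and a_notin: "emb a \<notin> {\<mu> + 2 * emb b, \<mu> - 2 * emb b, - \<mu> + 2 * emb b, - \<mu> - 2 * emb b}"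
  shows "is_LCD (2 * n) (C_hat n a b)"
proof -
  have finb: "finite (UNIV::'b set)" by simp
  have charpos: "CHAR('b) > 0" using finite_imp_CHAR_pos[OF finb] .
  have charprime: "prime CHAR('b)" using prime_CHAR_semidom charpos by blast
  have cardb': "card (UNIV :: 'b set) = p ^ (2*k)"
    using card_b q_def by (simp add: power_mult[symmetric] mult.commute)
  have "CHAR('b) dvd p ^ (2*k)" using CHAR_dvd_CARD[where 'a='b] cardb' by simp
  hence "CHAR('b) dvd p" using prime_dvd_power charprime by blast
  hence charb: "CHAR('b) = p" using primes_dvd_imp_eq charprime p_prime by blast
  have charK: "CHAR('b alg_closure) = p" using charb by simp
  have primeK: "prime CHAR('b alg_closure)" using charK p_prime by simp
  have p3: "p \<ge> 3" using p_prime p_odd prime_ge_2_nat[of p] by (cases "p = 2") auto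
  have q_odd: "odd q" using p_odd q_def by simp
  have q_ge: "q \<ge> 3" using self_le_power[of p k] p3 k_pos q_def by simp
  have frob_b: "(x + y) ^ q = x ^ q + y ^ q" for x y :: 'b
    by (rule freshmans_dream') (simp_all add: charprime charb q_def p_prime)
  have frob_b_diff: "(x - y) ^ q = x ^ q - y ^ q" for x y :: 'b
  proof -
    have "x ^ q = ((x - y) + y) ^ q" by simp
    also have "\<dots> = (x - y) ^ q + y ^ q" by (rule frob_b)
    finally show ?thesis by simp
  qed
  have frob_K: "(x + y) ^ q = x ^ q + y ^ q" for x y :: "'b alg_closure"
    by (rule freshmans_dream'[where n=k]) (simp_all add: charb p_prime q_def)
  have powq_a: "x ^ q = x" for x :: 'a using pow_card_same[of x] card_a by simp
  have powb: "y ^ (q^2) = y" for y :: 'b using pow_card_same[of y] card_b by simp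
  have e0: "emb 0 = 0"
  proof -
    have "emb 0 = emb 0 + emb 0" using emb_add[of 0 0] by (metis add_0)
    thus ?thesis by (metis add_cancel_right_right)
  qed
  have eneg: "emb (- x) = - emb x" for x
  proof -
    have "emb x + emb (- x) = 0" using emb_add[of x "-x"] e0 by simp
    thus ?thesis by (simp add: eq_neg_iff_add_eq_0 add.commute)
  qed
  have ediff: "emb (x - y) = emb x - emb y" for x y
    using emb_add[of x "-y"] eneg[of y] by simp
  have epow: "emb (x ^ j) = emb x ^ j" for x j
    by (induction j) (simp_all add: emb_one emb_mult)
  have einj: "x = 0" if "emb x = 0" for x
  proof (rule ccontr)
    assume "x \<noteq> 0"
    hence "emb x * emb (inverse x) = 1" using emb_mult[of x "inverse x"] emb_one by simp
    thus False using that by simp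
  qed
  have eq_emb: "emb x ^ q = emb x" for x using epow[of x q] powq_a by simp
  define \<phi> where "\<phi> x = to_ac (emb x)" for x
  have \<phi>_add: "\<phi> (x + y) = \<phi> x + \<phi> y" for x y by (simp add: \<phi>_def emb_add)
  have \<phi>_mult: "\<phi> (x * y) = \<phi> x * \<phi> y" for x y by (simp add: \<phi>_def emb_mult)
  have \<phi>_0: "\<phi> 0 = 0" by (simp add: \<phi>_def e0)
  have \<phi>_inj: "x = 0" if "\<phi> x = 0" for x using that einj by (simp add: \<phi>_def)
  have bK: "emb b \<noteq> 0" using b_nz einj by blast
  show ?thesis
  proof (rule lcd_reduce)
    fix u :: "nat \<Rightarrow> 'a"
    assume equ: "\<forall>i<n. u i + (\<Sum>k<n. Tm a b i k * (\<Sum>j<n. Tm a b j k * u j)) = 0"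
    show "\<forall>i<n. u i = 0"
    proof (rule ccontr)
      assume "\<not> (\<forall>i<n. u i = 0)"
      then obtain i0 where i0: "i0 < n" "u i0 \<noteq> 0" by auto
      define A where "A = \<phi> a"
      define B where "B = \<phi> b"
      define U where "U i = \<phi> (u i)" for i
      define \<nu> where "\<nu> = to_ac \<mu>"
      define TT where "TT v k = (\<Sum>j<n. Tm A B j k * v j)" for v k
      have Tm_hom: "\<phi> (Tm a b j k) = Tm A B j k" for j k
        by (simp add: Tm_def A_def B_def \<phi>_0)
      have eqU: "U i + TT (TT U) i = 0" if "i < n" for i
      proof -
        have "\<phi> (u i + (\<Sum>k<n. Tm a b i k * (\<Sum>j<n. Tm a b j k * u j))) = 0"
          using equ that \<phi>_0 by simp
        hence "U i + (\<Sum>k<n. Tm A B i k * (\<Sum>j<n. Tm A B j k * U j)) = 0"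
          by (simp add: \<phi>_add \<phi>_mult hom_sum[of \<phi>, OF \<phi>_add \<phi>_0] Tm_hom U_def)
        thus ?thesis unfolding TT_def by (simp add: Tm_sym[of A B i])
      qed
      have TTlin: "TT (\<lambda>j. v j + c * w j) k = TT v k + c * TT w k" for v w c k
        by (simp add: TT_def sum.distrib sum_distrib_left algebra_simps)
      have \<nu>2: "\<nu> ^ 2 = - 1" using mu_sq by (simp add: \<nu>_def flip: to_ac_power)
      define W where "W = (\<lambda>j. TT U j + \<nu> * U j)"
      have TW: "TT W i = \<nu> * W i" if "i < n" for i
      proof -
        have "TT W i = TT (TT U) i + \<nu> * TT U i" unfolding W_def by (rule TTlin)
        also have "\<dots> = - U i + \<nu> * TT U i" using eqU[OF that] by (simp add: eq_neg_iff_add_eq_0 add.commute)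
        also have "\<dots> = \<nu> * W i"
        proof -
          have nn: "\<nu> * \<nu> = -1" using \<nu>2 by (simp add: power2_eq_square)
          have "\<nu> * W i = \<nu> * TT U i + (\<nu> * \<nu>) * U i" by (simp add: W_def algebra_simps)
          thus ?thesis unfolding nn by simp
        qed
        finally show ?thesis .
      qed
      obtain l V lb where lV: "lb = \<mu> \<or> lb = - \<mu>" "l = to_ac lb" "\<forall>k<n. TT V k = l * V k" "\<exists>k<n. V k \<noteq> 0"
      proof (cases "\<exists>k<n. W k \<noteq> 0")
        case True
        thus ?thesis using that[of \<mu> \<nu> W] TW by (simp add: \<nu>_def)
      next
        case False
        hence "TT U k = (- \<nu>) * U k" if "k < n" for k
          using that by (simp add: W_def eq_neg_iff_add_eq_0 add.commute)
        moreover have "U i0 \<noteq> 0" using i0 \<phi>_inj by (auto simp: U_def)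
        ultimately show ?thesis using that[of "- \<mu>" "- \<nu>" U] i0 by (auto simp: \<nu>_def)
      qed
      have eig: "\<forall>k<n. (if k = 0 then 0 else B * V (k-1)) + A * V k + (if k+1 < n then B * V (k+1) else 0) = l * V k"
        using lV(3) by (simp add: TT_def tri3)
      define wb where "wb = (lb - emb a) / emb b"
      define w where "w = to_ac wb"
      have BK: "B \<noteq> 0" using bK by (simp add: B_def \<phi>_def)
      have w_eq: "w = (l - A) / B" by (simp add: w_def wb_def lV(2) A_def B_def \<phi>_def)
      have "degree [:1, -w, 1:] > 0" by simp
      then obtain t where troot: "poly [:1, -w, 1:] t = 0" using alg_closed_imp_poly_has_root by blast
      have troot': "1 + t * (- w + t) = 0" using troot by simp
      have tnz: "t \<noteq> 0" using troot' by auto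
      have tw: "t + inverse t = w"
      proof -
        have "t * t + 1 = w * t" using troot' by (simp add: algebra_simps)
        hence "(t * t + 1) / t = w" using tnz by (simp add: field_simps)
        moreover have "(t * t + 1) / t = t + inverse t" using tnz
          by (simp add: divide_inverse distrib_right mult.assoc)
        ultimately show ?thesis by simp
      qed
      have tdiff: "t - inverse t \<noteq> 0"
      proof
        assume h: "t - inverse t = 0"
        hence "t * t = 1" using tnz by (simp add: field_simps)
        hence "(t - 1) * (t + 1) = 0" by (simp add: algebra_simps)
        hence "t - 1 = 0 \<or> t + 1 = 0" by simp
        hence "t = 1 \<or> t = -1" by (auto simp: eq_neg_iff_add_eq_0)
        hence "w = 2 \<or> w = -2" using tw by auto
        hence "to_ac wb = to_ac 2 \<or> to_ac wb = to_ac (-2)" unfolding w_def by simp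
        hence "wb = 2 \<or> wb = -2" by (simp only: to_ac_eq_iff)
        thus False
        proof
          assume "wb = 2"
          hence "lb - emb a = 2 * emb b" using bK by (simp add: wb_def divide_eq_eq)
          hence "emb a = lb - 2 * emb b" by (simp add: algebra_simps)
          thus False using a_notin lV(1) by auto
        next
          assume "wb = -2"
          hence "lb - emb a = - 2 * emb b" using bK by (simp add: wb_def divide_eq_eq)
          hence "emb a = lb + 2 * emb b" by (simp add: algebra_simps)
          thus False using a_notin lV(1) by auto
        qed
      qed
      have tn: "t ^ (2 * (n + 1)) = 1"
        by (rule eigen[OF BK tnz tdiff _ _ eig lV(4)]) (use tw w_eq n_ge in auto)
      define N where "N = m + 1"
      have tN: "t ^ (2 * N) = 1"
      proof -
        have e: "2 * N * p ^ r = 2 * (n + 1)" unfolding m_def N_def by (simp add: mult.commute)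
        have "(t ^ (2 * N)) ^ (p ^ r) = 1" using tn by (simp only: power_mult[symmetric] e)
        moreover have pr: "p ^ r = CHAR('b alg_closure) ^ r" using charK by simp
        ultimately show ?thesis using frob_one[OF primeK pr] by blast
      qed
      have wq2: "w ^ (q^2) = w" unfolding w_def by (simp add: powb flip: to_ac_power)
      have tq4: "t ^ (q^2 * q^2) = t"
      proof -
        have "(t + inverse t) ^ (q^2) = t + inverse t" using wq2 tw by simp
        moreover have pr2: "q^2 = CHAR('b alg_closure) ^ (2*k)" using charK q_def
          by (simp add: power_mult[symmetric] mult.commute)
        ultimately have "t ^ (q^2) = t \<or> t ^ (q^2) = inverse t"
          using frob_inv[OF primeK pr2 tnz] by blast
        moreover have pm: "t ^ (q^2 * q^2) = (t ^ (q^2)) ^ (q^2)" by (rule power_mult)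
        ultimately show ?thesis
        proof (elim disjE)
          assume h: "t ^ (q^2) = inverse t"
          have "(inverse t) ^ (q^2) = inverse (t ^ (q^2))" by (rule power_inverse)
          thus ?thesis using pm h by simp
        qed simp
      qed
      have tq4': "t ^ (q^2 * q^2 - 1) = 1"
      proof -
        have M: "Suc (q^2 * q^2 - 1) = q^2 * q^2" using q_ge by simp
        have "t * t ^ (q^2 * q^2 - 1) = t ^ (q^2 * q^2)" by (metis M power_Suc)
        thus ?thesis using tq4 tnz by simp
      qed
      have t2: "t ^ 2 \<noteq> 1"
      proof
        assume "t ^ 2 = 1"
        hence "t = inverse t" using tnz by (simp add: power2_eq_square field_simps)
        thus False using tdiff by simp
      qed
      have muq: "\<mu> ^ q = \<mu> * (- 1) ^ ((q - 1) div 2)"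
      proof -
        have "q = Suc (2 * ((q - 1) div 2))" using odd_suc2[OF q_odd] .
        hence "\<mu> ^ q = \<mu> * (\<mu> ^ 2) ^ ((q - 1) div 2)" by (metis power_Suc power_mult)
        thus ?thesis using mu_sq by simp
      qed
      have "q mod 4 = 1 \<or> q mod 4 = 3" using q_odd by presburger
      thus False
      proof
        assume q1: "q mod 4 = 1"
        have "even ((q - 1) div 2)" using q1 by presburger
        hence muq1: "\<mu> ^ q = \<mu>" using muq by simp
        have lbq: "lb ^ q = lb" using lV(1) muq1 q_odd by (auto simp: power_minus_odd)
        have wbq: "wb ^ q = wb" by (simp add: wb_def power_divide frob_b_diff lbq eq_emb)
        have "(t + inverse t) ^ q = t + inverse t" using wbq tw unfolding w_def by (simp flip: to_ac_power)
        moreover have pr1: "q = CHAR('b alg_closure) ^ k" using charK q_def by simp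
        ultimately have "t ^ q = t \<or> t ^ q = inverse t"
          using frob_inv[OF primeK pr1 tnz] by blast
        moreover have pm: "t ^ (q * q) = (t ^ q) ^ q" by (rule power_mult)
        ultimately have "t ^ (q * q) = t"
        proof (elim disjE)
          assume h: "t ^ q = inverse t"
          have "(inverse t) ^ q = inverse (t ^ q)" by (rule power_inverse)
          thus ?thesis using pm h by simp
        qed simp
        hence tqq: "t ^ (q^2) = t" by (simp add: power2_eq_square)
        have M: "Suc (q^2 - 1) = q^2" using q_ge by simp
        have "t * t ^ (q^2 - 1) = t ^ (q^2)" by (metis M power_Suc)
        hence tq2: "t ^ (q^2 - 1) = 1" using tqq tnz by simp
        have "t ^ gcd (2 * N) (q^2 - 1) = 1" by (rule gcd_pow_one[OF tN tq2]) (simp add: N_def)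
        moreover have "q^2 - 1 = 2 * ((q^2 - 1) div 2)" using odd_sub2[of "q^2"] q_odd by simp
        ultimately have "t ^ (2 * gcd N ((q^2 - 1) div 2)) = 1"
          by (metis gcd_mult_distrib_nat)
        thus False using cond1[OF q1] t2 by (simp add: N_def)
      next
        assume q3: "q mod 4 = 3"
        have "odd ((q - 1) div 2)" using q3 by presburger
        hence muq3: "\<mu> ^ q = - \<mu>" using muq by simp
        have "t ^ gcd (2 * N) (q^2 * q^2 - 1) = 1" by (rule gcd_pow_one[OF tN tq4']) (simp add: N_def)
        moreover have "q^2 * q^2 - 1 = 2 * ((q^4 - 1) div 2)"
        proof -
          have "q^4 = q^2 * q^2" by (simp flip: power_add)
          moreover have "odd (q^4)" using q_odd by simp
          ultimately show ?thesis using odd_sub2[of "q^4"] by simp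
        qed
        ultimately have "t ^ (2 * gcd N ((q^4 - 1) div 2)) = 1"
          by (metis gcd_mult_distrib_nat)
        moreover have "2 * gcd N ((q^4 - 1) div 2) dvd q - 1"
        proof -
          have c: "gcd N ((q^4 - 1) div 2) dvd (q - 1) div 2" using cond3[OF q3] by (simp add: N_def)
          have "2 * gcd N ((q^4 - 1) div 2) dvd 2 * ((q - 1) div 2)" by (rule mult_dvd_mono[OF dvd_refl c])
          moreover have "2 * ((q - 1) div 2) = q - 1" using odd_sub2[OF q_odd] by simp
          ultimately show ?thesis by (simp only:)
        qed
        ultimately have tq1: "t ^ (q - 1) = 1"
        proof -
          assume h1: "t ^ (2 * gcd N ((q^4 - 1) div 2)) = 1" and h2: "2 * gcd N ((q^4 - 1) div 2) dvd q - 1"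
          then obtain c where "q - 1 = 2 * gcd N ((q^4 - 1) div 2) * c" by (auto elim: dvdE)
          thus ?thesis using h1 by (simp add: power_mult)
        qed
        have tq: "t ^ q = t"
        proof -
          have M: "Suc (q - 1) = q" using q_ge by simp
          have "t ^ q = t * t ^ (q - 1)" by (metis M power_Suc)
          thus ?thesis using tq1 by simp
        qed
        have "w ^ q = w" unfolding tw[symmetric] by (simp add: frob_K power_inverse tq)
        hence "to_ac (wb ^ q) = to_ac wb" by (simp add: w_def)
        hence wbq: "wb ^ q = wb" by (simp only: to_ac_eq_iff)
        have lbe: "lb = emb a + emb b * wb" using bK by (simp add: wb_def)
        have "lb ^ q = lb" by (simp add: lbe frob_b power_mult_distrib eq_emb wbq)
        moreover have "lb ^ q = - lb" using lV(1) muq3 q_odd by (auto simp: power_minus_odd)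
        ultimately have hl: "lb = - lb" by simp
        have "2 * lb = lb + lb" by (rule mult_2)
        also have "\<dots> = lb + (- lb)" using hl by (rule arg_cong)
        also have "\<dots> = 0" by (rule add.right_inverse)
        finally have "2 * lb = 0" .
        moreover have "(2::'b) \<noteq> 0"
        proof
          assume "(2::'b) = 0"
          hence "of_nat 2 = (0::'b)" by simp
          hence "p dvd 2" using charb of_nat_eq_0_iff_char_dvd by metis
          thus False using p3 dvd_imp_le[of p 2] by simp
        qed
        ultimately have "lb = 0" by simp
        hence "lb ^ 2 = 0" by simp
        moreover have "lb ^ 2 = - 1" using lV(1) mu_sq by auto
        ultimately show False by simp
      qed
    qed
  qed
qed

end
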